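(* Let $N\ge2$, $r>0$ and $0<\alpha\le r^{-1}$. Then \[ \int_0^r t(1-\alpha t)^{N-1}\,dt\ \le\ \frac{N}{N+1}\left(\int_0^r(1-\alpha t)^{N-1}\,dt\right)^2, \] with equality if and only if $\alpha=r^{-1}$. *)

theory Defs
  imports "HOL-Analysis.Analysis"
begin

end

theory Submission
  imports Defs
begin

lemma g_pos:
  fixes s :: real and N :: nat
  assumes "0 \<le> s" "s < 1" "N \<ge> 2"
  shows "s ^ N - real N * s + real N - 1 > 0"
proof -
  have sum_lt: "(\<Sum>k<N. s ^ k) < real N"
  proof -
    have "(\<Sum>k<N. s ^ k) < (\<Sum>k<N. (1::real))"
    proof (rule sum_strict_mono_ex1)
      show "finite {..<N}" by simp
      show "\<forall>x\<in>{..<N}. s ^ x \<le> 1" using assms by (simp add: power_le_one)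
      show "\<exists>a\<in>{..<N}. s ^ a < 1" using assms by (intro bexI[of _ 1]) auto
    qed
    then show ?thesis by simp
  qed
  have "s ^ N - 1 = (s - 1) * (\<Sum>k<N. s ^ k)"
    by (simp add: power_diff_1_eq)
  then have "s ^ N - real N * s + real N - 1 = (1 - s) * (real N - (\<Sum>k<N. s ^ k))"
    by (simp add: algebra_simps)
  also have "\<dots> > 0" using assms sum_lt by simp
  finally show ?thesis .
qed

lemma I0:
  fixes N :: nat and r \<alpha> :: real
  assumes "N \<ge> 1" "r > 0" "\<alpha> > 0"
  shows "integral {0..r} (\<lambda>t. (1 - \<alpha> * t) ^ (N - 1)) = (1 - (1 - \<alpha>*r) ^ N) / (\<alpha> * N)"
proof -
  let ?F = "\<lambda>t. -((1 - \<alpha> * t) ^ N) / (\<alpha> * real N)"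
  have D: "\<And>x. x \<in> {0..r} \<Longrightarrow> (?F has_vector_derivative (1 - \<alpha> * x) ^ (N - 1)) (at x within {0..r})"
  proof -
    fix x assume "x \<in> {0..r}"
    have "(?F has_real_derivative (1 - \<alpha> * x) ^ (N - 1)) (at x within {0..r})"
      using assms by (auto intro!: derivative_eq_intros simp: field_simps)
    then show "(?F has_vector_derivative (1 - \<alpha> * x) ^ (N - 1)) (at x within {0..r})"
      by (simp add: has_real_derivative_iff_has_vector_derivative)
  qed
  have "((\<lambda>t. (1 - \<alpha> * t) ^ (N - 1)) has_integral ?F r - ?F 0) {0..r}"
    using assms D by (intro fundamental_theorem_of_calculus) auto
  then show ?thesis using assms by (simp add: integral_unique field_simps)
qed

lemma I1:
  fixes n :: nat and r \<alpha> :: real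
  assumes "r > 0" "\<alpha> > 0"
  shows "integral {0..r} (\<lambda>t. t * (1 - \<alpha> * t) ^ n)
     = ((1 - (1 - \<alpha>*r) ^ Suc n) / real (Suc n) - (1 - (1 - \<alpha>*r) ^ Suc (Suc n)) / real (Suc (Suc n))) / \<alpha>^2"
proof -
  let ?F = "\<lambda>t. (-((1 - \<alpha> * t) ^ Suc n) / real (Suc n) + (1 - \<alpha> * t) ^ Suc (Suc n) / real (Suc (Suc n))) / \<alpha>^2"
  have D: "\<And>x. x \<in> {0..r} \<Longrightarrow> (?F has_vector_derivative x * (1 - \<alpha> * x) ^ n) (at x within {0..r})"
  proof -
    fix x assume "x \<in> {0..r}"
    have "(?F has_real_derivative ((real (Suc n) * (1 - \<alpha> * x) ^ n * \<alpha>) / real (Suc n)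
         - real (Suc (Suc n)) * (1 - \<alpha> * x) ^ Suc n * \<alpha> / real (Suc (Suc n))) / \<alpha>^2) (at x within {0..r})"
      using assms apply (auto intro!: derivative_eq_intros simp del: of_nat_Suc power_Suc)
      apply (simp add: power2_eq_square numeral_eq_Suc field_simps del: of_nat_Suc)
      done
    moreover have "((real (Suc n) * (1 - \<alpha> * x) ^ n * \<alpha>) / real (Suc n)
         - real (Suc (Suc n)) * (1 - \<alpha> * x) ^ Suc n * \<alpha> / real (Suc (Suc n))) / \<alpha>^2
         = x * (1 - \<alpha> * x) ^ n"
    proof -
      have a: "real (Suc n) \<noteq> 0" "real (Suc (Suc n)) \<noteq> 0" by auto
      have "((real (Suc n) * (1 - \<alpha> * x) ^ n * \<alpha>) / real (Suc n)
         - real (Suc (Suc n)) * (1 - \<alpha> * x) ^ Suc n * \<alpha> / real (Suc (Suc n)))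
         = (1 - \<alpha> * x) ^ n * \<alpha> - (1 - \<alpha> * x) ^ Suc n * \<alpha>"
        using a by (simp del: of_nat_Suc power_Suc)
      also have "\<dots> = \<alpha>^2 * (x * (1 - \<alpha> * x) ^ n)"
        by (simp add: algebra_simps power2_eq_square)
      finally show ?thesis using assms by simp
    qed
    ultimately have "(?F has_real_derivative x * (1 - \<alpha> * x) ^ n) (at x within {0..r})"
      by simp
    then show "(?F has_vector_derivative x * (1 - \<alpha> * x) ^ n) (at x within {0..r})"
      by (simp add: has_real_derivative_iff_has_vector_derivative)
  qed
  have "((\<lambda>t. t * (1 - \<alpha> * t) ^ n) has_integral ?F r - ?F 0) {0..r}"
    using assms D by (intro fundamental_theorem_of_calculus) auto
  then have "integral {0..r} (\<lambda>t. t * (1 - \<alpha> * t) ^ n) = ?F r - ?F 0"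
    by (rule integral_unique)
  also have "\<dots> = ((1 - (1 - \<alpha>*r) ^ Suc n) / real (Suc n) - (1 - (1 - \<alpha>*r) ^ Suc (Suc n)) / real (Suc (Suc n))) / \<alpha>^2"
    by (simp add: diff_divide_distrib add_divide_distrib del: of_nat_Suc power_Suc)
  finally show ?thesis .
qed

lemma key_alg:
  fixes x a A s :: real
  assumes "x > 0" "a \<noteq> 0"
  shows "x / (x + 1) * ((1 - A) / (a * x))\<^sup>2
      - ((1 - A) / x - (1 - s * A) / (x + 1)) / a^2
      = A * (A - x * s + x - 1) / (a^2 * x * (x + 1))"
proof -
  have h: "x + 1 \<noteq> 0" "x \<noteq> 0" using assms by auto
  have D: "a^2 * x * (x + 1) \<noteq> 0" using h assms by simp
  have gen: "x / (x + 1) * (B / (a^2 * x^2)) = B / (a^2 * x * (x + 1))" for B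
  proof -
    have "x / (x + 1) * (B / (a^2 * x^2)) = (x * B) / (x * (a^2 * x * (x + 1)))"
      by (simp add: times_divide_times_eq power2_eq_square algebra_simps)
    also have "\<dots> = B / (a^2 * x * (x + 1))"
      using h by (rule_tac mult_divide_mult_cancel_left) simp
    finally show ?thesis .
  qed
  have t1: "x / (x + 1) * ((1 - A) / (a * x))\<^sup>2 = (1 - A)^2 / (a^2 * x * (x + 1))"
    using gen[of "(1 - A)^2"] by (simp add: power_divide power_mult_distrib)
  have t2: "((1 - A) / x - (1 - s * A) / (x + 1)) / a^2
       = ((x + 1) * (1 - A) - x * (1 - s * A)) / (a^2 * x * (x + 1))"
    using h assms by (simp add: field_simps power2_eq_square)
  have t3: "(1 - A)^2 - ((x + 1) * (1 - A) - x * (1 - s * A)) = A * (A - x * s + x - 1)"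
    by (simp add: algebra_simps power2_eq_square)
  show ?thesis unfolding t1 t2 using t3
    by (metis diff_divide_distrib)
qed

theorem lemma2p10:
  fixes N :: nat and r \<alpha> :: real
  assumes "N \<ge> 2" and "r > 0" and "\<alpha> > 0" and "\<alpha> \<le> 1 / r"
  shows "integral {0..r} (\<lambda>t. t * (1 - \<alpha> * t) ^ (N - 1))
           \<le> real N / (real N + 1) * (integral {0..r} (\<lambda>t. (1 - \<alpha> * t) ^ (N - 1)))\<^sup>2
         \<and> (integral {0..r} (\<lambda>t. t * (1 - \<alpha> * t) ^ (N - 1))
              = real N / (real N + 1) * (integral {0..r} (\<lambda>t. (1 - \<alpha> * t) ^ (N - 1)))\<^sup>2
            \<longleftrightarrow> \<alpha> = 1 / r)"
proof -
  obtain n where nN: "N = Suc n" using assms(1) by (cases N) auto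
  define s where "s = 1 - \<alpha> * r"
  have ar: "\<alpha> * r \<le> 1" using assms by (simp add: field_simps)
  have s0: "0 \<le> s" and s1: "s < 1" using ar assms by (auto simp: s_def)
  define A where "A = s ^ N"
  have A0: "A \<ge> 0" using s0 by (simp add: A_def)
  have hI0: "integral {0..r} (\<lambda>t. (1 - \<alpha> * t) ^ (N - 1)) = (1 - A) / (\<alpha> * N)"
    using I0[of N r \<alpha>] assms by (simp add: A_def s_def)
  have hI1: "integral {0..r} (\<lambda>t. t * (1 - \<alpha> * t) ^ (N - 1))
     = ((1 - A) / real N - (1 - s * A) / (real N + 1)) / \<alpha>^2"
    using I1[of r \<alpha> n] assms by (simp add: A_def s_def nN)
  have key: "real N / (real N + 1) * ((1 - A) / (\<alpha> * N))\<^sup>2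
      - ((1 - A) / real N - (1 - s * A) / (real N + 1)) / \<alpha>^2
      = A * (A - real N * s + real N - 1) / (\<alpha>^2 * real N * (real N + 1))"
    using assms by (intro key_alg) auto
  have g: "A - real N * s + real N - 1 > 0"
    using g_pos[OF s0 s1 assms(1)] by (simp add: A_def)
  have den: "\<alpha>^2 * real N * (real N + 1) > 0" using assms by simp
  have nonneg: "A * (A - real N * s + real N - 1) / (\<alpha>^2 * real N * (real N + 1)) \<ge> 0"
    using A0 g den by simp
  have iff: "A * (A - real N * s + real N - 1) / (\<alpha>^2 * real N * (real N + 1)) = 0 \<longleftrightarrow> \<alpha> = 1 / r"
  proof -
    have "A * (A - real N * s + real N - 1) / (\<alpha>^2 * real N * (real N + 1)) = 0 \<longleftrightarrow> A = 0"
      using g den assms by simp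
    also have "\<dots> \<longleftrightarrow> s = 0" using nN by (auto simp: A_def)
    also have "\<dots> \<longleftrightarrow> \<alpha> = 1 / r" using assms by (auto simp: s_def field_simps)
    finally show ?thesis .
  qed
  show ?thesis
    unfolding hI0 hI1 using key nonneg iff by linarith
qed

end
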